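(* Let $f(x)=\frac1n\sum_{i=1}^n f_i(x)$ on $\mathbb{R}^d$ with each $f_i$ convex and $L$-smooth, with a nonempty minimizer set, and let $x_0\in\mathbb{R}^d$. Fix $\delta_t>0$, $p=\frac1n$, and let $\alpha,\tau_x,\tau_z,C_{\rm IDC},C_{\rm IFC}$ be: $\alpha$ the unique positive root of $\big(1-\frac{p(\alpha+\delta_t)}{\alpha+L+\delta_t}\big)\big(1+\frac{\delta_t}{\alpha}\big)^2=1$, $\tau_x=\frac{\alpha+\delta_t}{\alpha+L+\delta_t}$, $\tau_z=\frac{\tau_x}{\delta_t}-\frac{\alpha(1-\tau_x)}{\delta_tL}$, $C_{\rm IDC}=L^2+\frac{L\alpha^2p}{L+(1-p)(\alpha+\delta_t)}$, $C_{\rm IFC}=2L+\frac{2L\alpha^2p}{(L+(1-p)(\alpha+\delta_t))\delta_t}$. Define $f_i^{\delta_t}(x)=f_i(x)+\frac{\delta_t}2\|x-x_0\|^2$ and $f^{\delta_t}=\frac1n\sum_if_i^{\delta_t}$. Set $z_0=\tilde x_0=x_0$ and for $k=0,1,\dots$: $y_k=\tau_xz_k+(1-\tau_x)\tilde x_k+\tau_z\big(\delta_t(\tilde x_k-z_k)-\nabla f^{\delta_t}(\tilde x_k)\big)$; $z_{k+1}=\arg\min_x\{\langle\mathcal G_k^{\delta_t},x\rangle+\frac\alpha2\|x-z_k\|^2+\frac{\delta_t}2\|x-y_k\|^2\}$ with $\mathcal G^{\delta_t}_k=\nabla f^{\delta_t}_{i_k}(y_k)-\nabla f^{\delta_t}_{i_k}(\tilde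 x_k)+\nabla f^{\delta_t}(\tilde x_k)$, $i_k$ uniform on $\{1,\dots,n\}$; $\tilde x_{k+1}=y_k$ with probability $p$, else $\tilde x_{k+1}=\tilde x_k$. Then for every $k\ge0$: (i) if $\|x_0-x^\star\|\le R_0$ for some minimizer $x^\star$ of $f$, then $\mathbb E\|\nabla f(\tilde x_k)\|\le\big(\delta_t+(1+\frac{\delta_t}{\alpha})^{-k}\sqrt{C_{\rm IDC}}\big)R_0$; (ii) if $f(x_0)-\min f\le\Delta_0$, then $\mathbb E\|\nabla f(\tilde x_k)\|\le\big(\sqrt{2\delta_t}+(1+\frac{\delta_t}{\alpha})^{-k}\sqrt{C_{\rm IFC}}\big)\sqrt{\Delta_0}$.
   Context: $L$-smooth means $L$-Lipschitz gradient; norms are Euclidean; $\mathbb E$ is total expectation over the sampling. The iteration is the inner loop (for a fixed regularization parameter $\delta_t$) of the paper's R-Acc-SVRG-G method. *)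

theory Defs
  imports "HOL-Probability.Probability"
begin

definition avgF :: "nat \<Rightarrow> (nat \<Rightarrow> 'a \<Rightarrow> real) \<Rightarrow> 'a \<Rightarrow> real" where
  "avgF n f x = (1 / real n) * (\<Sum>i<n. f i x)"

definition avgG :: "nat \<Rightarrow> (nat \<Rightarrow> 'a \<Rightarrow> 'a::real_vector) \<Rightarrow> 'a \<Rightarrow> 'a" where
  "avgG n g x = (1 / real n) *\<^sub>R (\<Sum>i<n. g i x)"

text \<open>Gradient of the regularized component f_i^delta(x) = f_i(x) + delta/2 ||x - x0||^2.\<close>
definition gradReg :: "(nat \<Rightarrow> 'a \<Rightarrow> 'a::real_vector) \<Rightarrow> real \<Rightarrow> 'a \<Rightarrow> nat \<Rightarrow> 'a \<Rightarrow> 'a" where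
  "gradReg g \<delta> x0 i x = g i x + \<delta> *\<^sub>R (x - x0)"

definition gradRegF :: "nat \<Rightarrow> (nat \<Rightarrow> 'a \<Rightarrow> 'a::real_vector) \<Rightarrow> real \<Rightarrow> 'a \<Rightarrow> 'a \<Rightarrow> 'a" where
  "gradRegF n g \<delta> x0 x = avgG n (gradReg g \<delta> x0) x"

definition tau_x :: "real \<Rightarrow> real \<Rightarrow> real \<Rightarrow> real" where
  "tau_x L \<delta> \<alpha> = (\<alpha> + \<delta>) / (\<alpha> + L + \<delta>)"

definition tau_z :: "real \<Rightarrow> real \<Rightarrow> real \<Rightarrow> real" where
  "tau_z L \<delta> \<alpha> = tau_x L \<delta> \<alpha> / \<delta> - \<alpha> * (1 - tau_x L \<delta> \<alpha>) / (\<delta> * L)"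

definition C_IDC :: "real \<Rightarrow> real \<Rightarrow> real \<Rightarrow> real \<Rightarrow> real" where
  "C_IDC p L \<delta> \<alpha> = L\<^sup>2 + L * \<alpha>\<^sup>2 * p / (L + (1 - p) * (\<alpha> + \<delta>))"

definition C_IFC :: "real \<Rightarrow> real \<Rightarrow> real \<Rightarrow> real \<Rightarrow> real" where
  "C_IFC p L \<delta> \<alpha> = 2 * L + 2 * L * \<alpha>\<^sup>2 * p / ((L + (1 - p) * (\<alpha> + \<delta>)) * \<delta>)"

definition y_pt :: "nat \<Rightarrow> (nat \<Rightarrow> 'a \<Rightarrow> 'a::real_vector) \<Rightarrow> real \<Rightarrow> real \<Rightarrow> real \<Rightarrow> 'a \<Rightarrow> 'a \<Rightarrow> 'a \<Rightarrow> 'a" where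
  "y_pt n g L \<delta> \<alpha> x0 z xt =
     tau_x L \<delta> \<alpha> *\<^sub>R z + (1 - tau_x L \<delta> \<alpha>) *\<^sub>R xt
     + tau_z L \<delta> \<alpha> *\<^sub>R (\<delta> *\<^sub>R (xt - z) - gradRegF n g \<delta> x0 xt)"

definition G_vr :: "nat \<Rightarrow> (nat \<Rightarrow> 'a \<Rightarrow> 'a::real_vector) \<Rightarrow> real \<Rightarrow> 'a \<Rightarrow> nat \<Rightarrow> 'a \<Rightarrow> 'a \<Rightarrow> 'a" where
  "G_vr n g \<delta> x0 i y xt = gradReg g \<delta> x0 i y - gradReg g \<delta> x0 i xt + gradRegF n g \<delta> x0 xt"

definition z_next :: "real \<Rightarrow> real \<Rightarrow> 'a::real_inner \<Rightarrow> 'a \<Rightarrow> 'a \<Rightarrow> 'a" where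
  "z_next \<alpha> \<delta> G z y =
     (ARG_MIN (\<lambda>x. G \<bullet> x + \<alpha> / 2 * (norm (x - z))\<^sup>2 + \<delta> / 2 * (norm (x - y))\<^sup>2) x. True)"

definition svrg_step :: "nat \<Rightarrow> (nat \<Rightarrow> 'a \<Rightarrow> 'a::real_inner) \<Rightarrow> real \<Rightarrow> real \<Rightarrow> real \<Rightarrow> 'a
     \<Rightarrow> 'a \<times> 'a \<Rightarrow> ('a \<times> 'a) pmf" where
  "svrg_step n g L \<delta> \<alpha> x0 s =
     (case s of (z, xt) \<Rightarrow>
       (let y = y_pt n g L \<delta> \<alpha> x0 z xt in
        do { i \<leftarrow> pmf_of_set {..<n};
             b \<leftarrow> bernoulli_pmf (1 / real n);
             return_pmf (z_next \<alpha> \<delta> (G_vr n g \<delta> x0 i y xt) z y, if b then y else xt) }))"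

fun svrg_state :: "nat \<Rightarrow> (nat \<Rightarrow> 'a \<Rightarrow> 'a::real_inner) \<Rightarrow> real \<Rightarrow> real \<Rightarrow> real \<Rightarrow> 'a
     \<Rightarrow> nat \<Rightarrow> ('a \<times> 'a) pmf" where
  "svrg_state n g L \<delta> \<alpha> x0 0 = return_pmf (x0, x0)"
| "svrg_state n g L \<delta> \<alpha> x0 (Suc k) = svrg_state n g L \<delta> \<alpha> x0 k \<bind> svrg_step n g L \<delta> \<alpha> x0"

end

theory Submission
  imports Defs
begin

lemma line_deriv:
  fixes F :: "'a::real_inner \<Rightarrow> real"
  assumes "\<And>x. GDERIV F x :> G x"
  shows "((\<lambda>t. F (x + t *\<^sub>R v)) has_real_derivative (G (x + t *\<^sub>R v) \<bullet> v)) (at t)"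
proof -
  have d1: "((\<lambda>t. x + t *\<^sub>R v) has_derivative (\<lambda>h. h *\<^sub>R v)) (at t)"
    by (auto intro!: derivative_eq_intros)
  have d2: "(F has_derivative (\<lambda>h. h \<bullet> G (x + t *\<^sub>R v))) (at (x + t *\<^sub>R v))"
    using assms unfolding gderiv_def by blast
  have "((\<lambda>t. F (x + t *\<^sub>R v)) has_derivative (\<lambda>h. (h *\<^sub>R v) \<bullet> G (x + t *\<^sub>R v))) (at t)"
    using has_derivative_compose[OF d1 d2] by (simp add: o_def)
  moreover have "(\<lambda>h. (h *\<^sub>R v) \<bullet> G (x + t *\<^sub>R v)) = (*) (G (x + t *\<^sub>R v) \<bullet> v)"
    by (auto simp: inner_commute)
  ultimately show ?thesis by (simp add: has_field_derivative_def)
qed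

lemma descent:
  fixes F :: "'a::real_inner \<Rightarrow> real"
  assumes gr: "\<And>x. GDERIV F x :> G x"
    and lip: "\<And>x y. norm (G x - G y) \<le> L * norm (x - y)"
  shows "F y \<le> F x + G x \<bullet> (y - x) + L / 2 * (norm (y - x))\<^sup>2"
proof -
  define v where "v = y - x"
  define \<psi> where "\<psi> t = F (x + t *\<^sub>R v) - t * (G x \<bullet> v) - L / 2 * t\<^sup>2 * (norm v)\<^sup>2" for t
  have "\<psi> 1 \<le> \<psi> 0"
  proof (rule DERIV_nonpos_imp_nonincreasing[of 0 1])
    fix t :: real assume t: "0 \<le> t" "t \<le> 1"
    have "(\<psi> has_real_derivative (G (x + t *\<^sub>R v) \<bullet> v - G x \<bullet> v - L * t * (norm v)\<^sup>2)) (at t)"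
      unfolding \<psi>_def
      by (rule derivative_eq_intros line_deriv[OF gr] refl | simp)+
    moreover have "G (x + t *\<^sub>R v) \<bullet> v - G x \<bullet> v - L * t * (norm v)\<^sup>2 \<le> 0"
    proof -
      have "G (x + t *\<^sub>R v) \<bullet> v - G x \<bullet> v = (G (x + t *\<^sub>R v) - G x) \<bullet> v"
        by (simp add: inner_diff_left)
      also have "\<dots> \<le> norm (G (x + t *\<^sub>R v) - G x) * norm v"
        by (rule norm_cauchy_schwarz)
      also have "\<dots> \<le> (L * norm (t *\<^sub>R v)) * norm v"
        using lip[of "x + t *\<^sub>R v" x] by (intro mult_right_mono) auto
      also have "\<dots> = L * t * (norm v)\<^sup>2" using t by (simp add: power2_eq_square)
      finally show ?thesis by simp
    qed
    ultimately show "\<exists>y. DERIV \<psi> t :> y \<and> y \<le> 0" by blast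
  qed simp
  then show ?thesis unfolding \<psi>_def v_def by (simp add: algebra_simps)
qed

lemma tangent:
  fixes F :: "'a::real_inner \<Rightarrow> real"
  assumes cv: "convex_on UNIV F" and gr: "\<And>x. GDERIV F x :> G x"
  shows "F b + G b \<bullet> (x - b) \<le> F x"
proof -
  define v where "v = x - b"
  define \<psi> where "\<psi> t = F (b + t *\<^sub>R v)" for t
  have cvx: "convex_on UNIV \<psi>"
  proof (rule convex_onI)
    fix t s r :: real assume t: "0 < t" "t < 1"
    have "b + ((1 - t) *\<^sub>R s + t *\<^sub>R r) *\<^sub>R v = (1 - t) *\<^sub>R (b + s *\<^sub>R v) + t *\<^sub>R (b + r *\<^sub>R v)"
      by (simp add: algebra_simps)
    then show "\<psi> ((1 - t) *\<^sub>R s + t *\<^sub>R r) \<le> (1 - t) * \<psi> s + t * \<psi> r"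
      unfolding \<psi>_def using convex_onD[OF cv, of t "b + s *\<^sub>R v" "b + r *\<^sub>R v"] t by simp
  qed simp
  have d: "(\<psi> has_real_derivative (G (b + 0 *\<^sub>R v) \<bullet> v)) (at 0)"
    unfolding \<psi>_def by (rule line_deriv[OF gr])
  have "\<psi> 1 - \<psi> 0 \<ge> (G (b + 0 *\<^sub>R v) \<bullet> v) * (1 - 0)"
    by (rule convex_on_imp_above_tangent[OF cvx]) (use d in auto)
  then show ?thesis unfolding \<psi>_def v_def by simp
qed

lemma cocoercive:
  fixes F :: "'a::real_inner \<Rightarrow> real"
  assumes cv: "convex_on UNIV F" and gr: "\<And>x. GDERIV F x :> G x"
    and lip: "\<And>x y. norm (G x - G y) \<le> L * norm (x - y)" and L: "L > 0"
  shows "F b + G b \<bullet> (a - b) + (norm (G a - G b))\<^sup>2 / (2 * L) \<le> F a"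
proof -
  define w where "w = G a - G b"
  define y where "y = a - (1 / L) *\<^sub>R w"
  have t: "F b + G b \<bullet> (y - b) \<le> F y" by (rule tangent[OF cv gr])
  have d: "F y \<le> F a + G a \<bullet> (y - a) + L / 2 * (norm (y - a))\<^sup>2" by (rule descent[OF gr lip])
  have e1: "G b \<bullet> (y - b) = G b \<bullet> (a - b) - (1/L) * (G b \<bullet> w)"
    unfolding y_def by (simp add: inner_diff_right)
  have e2: "G a \<bullet> (y - a) = - ((1/L) * (G a \<bullet> w))"
    unfolding y_def by (simp add: inner_diff_right)
  have e3: "(norm (y - a))\<^sup>2 = (1/L)\<^sup>2 * (norm w)\<^sup>2"
    unfolding y_def using L by (simp add: power_divide)
  have e4: "G a \<bullet> w - G b \<bullet> w = (norm w)\<^sup>2"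
    unfolding w_def by (simp add: power2_norm_eq_inner inner_diff_left)
  have "F b + G b \<bullet> (a - b) - (1/L) * (G b \<bullet> w) \<le> F a - (1/L) * (G a \<bullet> w) + L / 2 * ((1/L)\<^sup>2 * (norm w)\<^sup>2)"
    using t d[unfolded e3] e1 e2 by linarith
  moreover have "L / 2 * ((1/L)\<^sup>2 * (norm w)\<^sup>2) = (norm w)\<^sup>2 / (2 * L)"
    using L by (simp add: power2_eq_square field_simps)
  moreover have "(1/L) * (G a \<bullet> w) - (1/L) * (G b \<bullet> w) = 2 * ((norm w)\<^sup>2 / (2 * L))"
  proof -
    have "(1/L) * (G a \<bullet> w) - (1/L) * (G b \<bullet> w) = (G a \<bullet> w - G b \<bullet> w) / L"
      by (simp add: diff_divide_distrib)
    also have "\<dots> = 2 * ((norm w)\<^sup>2 / (2 * L))" using e4 L by simp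
    finally show ?thesis .
  qed
  ultimately show ?thesis unfolding w_def[symmetric] by linarith
qed

locale svrg =
  fixes n :: nat and f :: "nat \<Rightarrow> 'a::euclidean_space \<Rightarrow> real" and g :: "nat \<Rightarrow> 'a \<Rightarrow> 'a"
    and L \<delta> \<alpha> :: real and x0 :: 'a
  assumes n_pos: "n \<ge> 1"
    and L_pos: "L > 0"
    and convex: "\<And>i. i < n \<Longrightarrow> convex_on UNIV (f i)"
    and grad: "\<And>i x. i < n \<Longrightarrow> GDERIV (f i) x :> g i x"
    and smooth: "\<And>i x y. i < n \<Longrightarrow> norm (g i x - g i y) \<le> L * norm (x - y)"
    and minimizer_exists: "\<exists>xs. \<forall>x. avgF n f xs \<le> avgF n f x"
    and delta_pos: "\<delta> > 0"
    and alpha_pos: "\<alpha> > 0"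
    and alpha_root: "(1 - (1 / real n) * (\<alpha> + \<delta>) / (\<alpha> + L + \<delta>)) * (1 + \<delta> / \<alpha>)\<^sup>2 = 1"
begin

lemma avg_convex: "convex_on UNIV (avgF n f)"
proof -
  have "m \<le> n \<Longrightarrow> convex_on UNIV (\<lambda>x. \<Sum>i<m. f i x)" for m
  proof (induction m)
    case 0 then show ?case by (simp add: convex_on_const)
  next
    case (Suc m)
    then show ?case using convex[of m] by (auto intro!: convex_on_add)
  qed
  then have "convex_on UNIV (\<lambda>x. \<Sum>i<n. f i x)" by simp
  then have "convex_on UNIV (\<lambda>x. (1 / real n) * (\<Sum>i<n. f i x))"
    by (intro convex_on_cmul) auto
  then show ?thesis unfolding avgF_def[abs_def] .
qed

lemma avg_grad: "GDERIV (avgF n f) x :> avgG n g x"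
proof -
  have "((\<lambda>x. \<Sum>i<n. f i x) has_derivative (\<lambda>h. \<Sum>i<n. h \<bullet> g i x)) (at x)"
    by (rule has_derivative_sum) (use grad in \<open>auto simp: gderiv_def\<close>)
  then have "((\<lambda>x. (1 / real n) * (\<Sum>i<n. f i x)) has_derivative (\<lambda>h. (1 / real n) * (\<Sum>i<n. h \<bullet> g i x))) (at x)"
    by (rule has_derivative_mult_right)
  moreover have "(\<lambda>h. (1 / real n) * (\<Sum>i<n. h \<bullet> g i x)) = (\<lambda>h. h \<bullet> avgG n g x)"
    by (auto simp: avgG_def inner_sum_right)
  ultimately show ?thesis unfolding gderiv_def avgF_def[abs_def] by simp
qed

lemma avg_lip: "norm (avgG n g x - avgG n g y) \<le> L * norm (x - y)"
proof -
  have "avgG n g x - avgG n g y = (1 / real n) *\<^sub>R (\<Sum>i<n. g i x - g i y)"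
    by (simp add: avgG_def sum_subtractf scaleR_diff_right)
  then have "norm (avgG n g x - avgG n g y) = (1 / real n) * norm (\<Sum>i<n. g i x - g i y)"
    by simp
  also have "\<dots> \<le> (1 / real n) * (\<Sum>i<n. norm (g i x - g i y))"
    by (intro mult_left_mono norm_sum) auto
  also have "\<dots> \<le> (1 / real n) * (\<Sum>i<n. L * norm (x - y))"
    by (intro mult_left_mono sum_mono smooth) auto
  also have "\<dots> = L * norm (x - y)" using n_pos by simp
  finally show ?thesis .
qed

lemma gradRegF_eq: "gradRegF n g \<delta> x0 x = avgG n g x + \<delta> *\<^sub>R (x - x0)"
  using n_pos by (simp add: gradRegF_def avgG_def gradReg_def sum.distrib scaleR_add_right sum_constant_scaleR)

lemma avg_coco: "avgF n f b + avgG n g b \<bullet> (a - b) + (norm (avgG n g a - avgG n g b))\<^sup>2 / (2 * L) \<le> avgF n f a"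
  by (rule cocoercive[OF avg_convex avg_grad avg_lip L_pos])

lemma comp_coco: "i < n \<Longrightarrow> f i b + g i b \<bullet> (a - b) + (norm (g i a - g i b))\<^sup>2 / (2 * L) \<le> f i a"
  by (rule cocoercive[OF convex grad smooth L_pos])

lemma avg_descent: "avgF n f y \<le> avgF n f x + avgG n g x \<bullet> (y - x) + L / 2 * (norm (y - x))\<^sup>2"
  by (rule descent[OF avg_grad avg_lip])

lemma avg_tangent: "avgF n f b + avgG n g b \<bullet> (x - b) \<le> avgF n f x"
  by (rule tangent[OF avg_convex avg_grad])

definition hreg :: "'a \<Rightarrow> real" where
  "hreg x = avgF n f x + \<delta> / 2 * (norm (x - x0))\<^sup>2"

lemma hreg_deriv: "(hreg has_derivative (\<lambda>v. v \<bullet> (avgG n g x + \<delta> *\<^sub>R (x - x0)))) (at x)"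
proof -
  have d1: "(avgF n f has_derivative (\<lambda>v. v \<bullet> avgG n g x)) (at x)"
    using avg_grad unfolding gderiv_def .
  have d2: "((\<lambda>x. \<delta> / 2 * ((x - x0) \<bullet> (x - x0))) has_derivative (\<lambda>v. v \<bullet> (\<delta> *\<^sub>R (x - x0)))) (at x)"
    by (auto intro!: derivative_eq_intros simp: inner_commute algebra_simps)
  have "hreg = (\<lambda>x. avgF n f x + \<delta> / 2 * ((x - x0) \<bullet> (x - x0)))"
    by (auto simp: hreg_def power2_norm_eq_inner)
  then show ?thesis using has_derivative_add[OF d1 d2] by (simp add: inner_add_right)
qed

lemma xstar_exists: "\<exists>xs. avgG n g xs = \<delta> *\<^sub>R (x0 - xs) \<and> (\<forall>x. hreg xs \<le> hreg x)"
proof -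
  obtain xm where xm: "\<And>x. avgF n f xm \<le> avgF n f x" using minimizer_exists by blast
  define r where "r = sqrt (2 * (hreg x0 - avgF n f xm) / \<delta>)"
  have cont: "continuous_on UNIV hreg"
    using hreg_deriv has_derivative_continuous continuous_at_imp_continuous_on by blast
  obtain xs where xs: "xs \<in> cball x0 r" "\<And>y. y \<in> cball x0 r \<Longrightarrow> hreg xs \<le> hreg y"
    using continuous_attains_inf[of "cball x0 r" hreg] cont
    by (metis compact_cball continuous_on_subset empty_iff subset_UNIV centre_in_cball r_def real_sqrt_ge_zero
        hreg_def xm delta_pos diff_self norm_zero zero_power2 mult_zero_right add_0_right divide_nonneg_pos
        diff_ge_0_iff_ge mult_nonneg_nonneg zero_le_numeral less_imp_le)
  have glob: "hreg xs \<le> hreg y" for y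
  proof (cases "y \<in> cball x0 r")
    case True then show ?thesis using xs by blast
  next
    case False
    then have "norm (y - x0) > r" by (simp add: dist_norm norm_minus_commute)
    moreover have "r \<ge> 0" unfolding r_def using xm[of x0] delta_pos by (auto simp: hreg_def)
    ultimately have "(norm (y - x0))\<^sup>2 > r\<^sup>2" by (simp add: power_strict_mono)
    moreover have "r\<^sup>2 = 2 * (hreg x0 - avgF n f xm) / \<delta>"
      unfolding r_def using xm[of x0] delta_pos by (auto simp: hreg_def)
    ultimately have "\<delta> / 2 * (norm (y - x0))\<^sup>2 > hreg x0 - avgF n f xm"
      using delta_pos by (simp add: field_simps)
    then have "hreg y > hreg x0" using xm[of y] by (simp add: hreg_def)
    moreover have "hreg xs \<le> hreg x0" using xs(2)[of x0] xs by (simp add: \<open>r \<ge> 0\<close>)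
    ultimately show ?thesis by simp
  qed
  have "(\<lambda>v. v \<bullet> (avgG n g xs + \<delta> *\<^sub>R (xs - x0))) = (\<lambda>v. 0)"
    by (rule has_derivative_local_min[OF hreg_deriv]) (use glob in auto)
  then have "(avgG n g xs + \<delta> *\<^sub>R (xs - x0)) \<bullet> (avgG n g xs + \<delta> *\<^sub>R (xs - x0)) = 0"
    by meson
  then have "avgG n g xs + \<delta> *\<^sub>R (xs - x0) = 0" by simp
  then have "avgG n g xs = \<delta> *\<^sub>R (x0 - xs)" by (simp add: algebra_simps eq_neg_iff_add_eq_0)
  with glob show ?thesis by blast
qed

end

lemma aux_sq: "(N::real) = N0 + 2 * P + W \<Longrightarrow> a / 2 * N = a / 2 * N0 + a * P + a / 2 * W"
  by (simp add: algebra_simps)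

lemma quad_identity:
  fixes G z y x :: "'a::real_inner" and a d :: real
  assumes "a + d > 0"
  defines "xh \<equiv> (1 / (a + d)) *\<^sub>R (a *\<^sub>R z + d *\<^sub>R y - G)"
  shows "G \<bullet> x + a / 2 * (norm (x - z))\<^sup>2 + d / 2 * (norm (x - y))\<^sup>2
       = G \<bullet> xh + a / 2 * (norm (xh - z))\<^sup>2 + d / 2 * (norm (xh - y))\<^sup>2 + (a + d) / 2 * (norm (x - xh))\<^sup>2"
proof -
  define w where "w = x - xh"
  have x: "x = xh + w" by (simp add: w_def)
  have key: "G + a *\<^sub>R (xh - z) + d *\<^sub>R (xh - y) = 0"
  proof -
    have "(a + d) *\<^sub>R xh = a *\<^sub>R z + d *\<^sub>R y - G" using assms(1) by (simp add: xh_def)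
    then show ?thesis by (simp add: algebra_simps)
  qed
  have n1: "a / 2 * (norm (x - z))\<^sup>2 = a / 2 * (norm (xh - z))\<^sup>2 + a * ((xh - z) \<bullet> w) + a / 2 * (norm w)\<^sup>2"
  proof -
    have "(norm (x - z))\<^sup>2 = (norm (xh - z))\<^sup>2 + 2 * ((xh - z) \<bullet> w) + (norm w)\<^sup>2"
      unfolding x by (simp add: power2_norm_eq_inner algebra_simps inner_commute)
    then show ?thesis by (rule aux_sq)
  qed
  have n2: "d / 2 * (norm (x - y))\<^sup>2 = d / 2 * (norm (xh - y))\<^sup>2 + d * ((xh - y) \<bullet> w) + d / 2 * (norm w)\<^sup>2"
  proof -
    have "(norm (x - y))\<^sup>2 = (norm (xh - y))\<^sup>2 + 2 * ((xh - y) \<bullet> w) + (norm w)\<^sup>2"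
      unfolding x by (simp add: power2_norm_eq_inner algebra_simps inner_commute)
    then show ?thesis by (rule aux_sq)
  qed
  have n3: "G \<bullet> w + a * ((xh - z) \<bullet> w) + d * ((xh - y) \<bullet> w) = 0"
  proof -
    have "(G + a *\<^sub>R (xh - z) + d *\<^sub>R (xh - y)) \<bullet> w = 0" using key by simp
    then show ?thesis by (simp add: inner_add_left)
  qed
  have n4: "G \<bullet> x = G \<bullet> xh + G \<bullet> w" unfolding x by (simp add: inner_add_right)
  have n5: "(a + d) / 2 * (norm (x - xh))\<^sup>2 = a / 2 * (norm w)\<^sup>2 + d / 2 * (norm w)\<^sup>2"
    unfolding w_def by (simp add: algebra_simps add_divide_distrib)
  show ?thesis using n1 n2 n3 n4 n5 by linarith
qed

lemma z_next_eq:
  assumes "\<alpha> + \<delta> > 0"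
  shows "z_next \<alpha> \<delta> G z y = (1 / (\<alpha> + \<delta>)) *\<^sub>R (\<alpha> *\<^sub>R z + \<delta> *\<^sub>R y - G)"
proof -
  define xh where "xh = (1 / (\<alpha> + \<delta>)) *\<^sub>R (\<alpha> *\<^sub>R z + \<delta> *\<^sub>R y - G)"
  define Q where "Q x = G \<bullet> x + \<alpha> / 2 * (norm (x - z))\<^sup>2 + \<delta> / 2 * (norm (x - y))\<^sup>2" for x
  have id: "Q x = Q xh + (\<alpha> + \<delta>) / 2 * (norm (x - xh))\<^sup>2" for x
    unfolding Q_def xh_def by (rule quad_identity[OF assms])
  have "Q xh \<le> Q x" for x
  proof -
    have "(\<alpha> + \<delta>) / 2 * (norm (x - xh))\<^sup>2 \<ge> 0" using assms by simp
    then show ?thesis using id[of x] by linarith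
  qed
  then have "is_arg_min Q (\<lambda>x. True) xh"
    unfolding is_arg_min_def by (auto simp: not_less)
  then have am: "is_arg_min Q (\<lambda>x. True) (arg_min Q (\<lambda>x. True))"
    unfolding arg_min_def by (rule someI)
  define m where "m = arg_min Q (\<lambda>x. True)"
  have "Q m \<le> Q xh" using am unfolding m_def is_arg_min_def by (auto simp: not_less)
  then have "(\<alpha> + \<delta>) / 2 * (norm (m - xh))\<^sup>2 \<le> 0" using id[of m] by simp
  then have "(norm (m - xh))\<^sup>2 \<le> 0" using assms
    by (simp add: mult_le_0_iff)
  then have "m = xh" by simp
  then show ?thesis unfolding z_next_def m_def Q_def xh_def by simp
qed

lemma core_alg:
  fixes p S \<alpha> \<delta> L c \<rho>2 Q R Eu E2 Xy X2 A2 Dx Dy :: real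
  assumes S: "S = \<alpha> + L + \<delta>" and pos: "\<alpha> > 0" "\<delta> > 0" "L > 0" "p > 0"
    and c: "c = p * (\<alpha> + \<delta>)\<^sup>2 / (2 * S)"
    and r1: "\<rho>2 = \<alpha>\<^sup>2 / (\<alpha> + \<delta>)\<^sup>2" and r2: "\<rho>2 = 1 - p * (\<alpha> + \<delta>) / S"
    and Q: "Q = (\<alpha> / S) * Eu + (L / S) * R - (1 / S) * Xy"
    and I1: "Dy \<le> Q" and I3: "A2 \<le> 2 * L * (Dx - Dy + Q - R)" and X2: "X2 \<ge> 0"
  shows "p * Dy + (1 - p) * Dx + c / (\<alpha> + \<delta>)\<^sup>2 * (\<alpha>\<^sup>2 * E2 - 2 * (\<alpha> * Eu) + A2 + 2 * Xy - X2)
         \<le> \<rho>2 * (Dx + c * E2)"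
proof -
  have Spos: "S > 0" using S pos by simp
  have Sne: "S \<noteq> 0" using Spos by simp
  have ad: "\<alpha> + \<delta> \<noteq> 0" using pos by simp
  have "S * ((\<alpha> / S) * Eu + (L / S) * R - (1 / S) * Xy) = \<alpha> * Eu + L * R - Xy"
    using Sne by (simp add: field_simps)
  then have aEu: "\<alpha> * Eu = S * Q - L * R + Xy" unfolding Q[symmetric] by simp
  have rr: "\<rho>2 * (Dx + c * E2) = (1 - p * (\<alpha> + \<delta>) / S) * Dx + (\<alpha>\<^sup>2 / (\<alpha> + \<delta>)\<^sup>2) * (p * (\<alpha> + \<delta>)\<^sup>2 / (2 * S)) * E2"
  proof -
    have "\<rho>2 * (Dx + c * E2) = \<rho>2 * Dx + \<rho>2 * c * E2" by (simp add: algebra_simps)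
    also have "\<rho>2 * Dx = (1 - p * (\<alpha> + \<delta>) / S) * Dx" by (simp add: r2)
    also have "\<rho>2 * c * E2 = (\<alpha>\<^sup>2 / (\<alpha> + \<delta>)\<^sup>2) * (p * (\<alpha> + \<delta>)\<^sup>2 / (2 * S)) * E2" by (simp add: r1 c)
    finally show ?thesis .
  qed
  have "p * Dy + (1 - p) * Dx + c / (\<alpha> + \<delta>)\<^sup>2 * (\<alpha>\<^sup>2 * E2 - 2 * (\<alpha> * Eu) + A2 + 2 * Xy - X2) - \<rho>2 * (Dx + c * E2)
      = p * Dy + (1 - p) * Dx + c / (\<alpha> + \<delta>)\<^sup>2 * (\<alpha>\<^sup>2 * E2 - 2 * (S * Q - L * R + Xy) + A2 + 2 * Xy - X2) - ((1 - p * (\<alpha> + \<delta>) / S) * Dx + (\<alpha>\<^sup>2 / (\<alpha> + \<delta>)\<^sup>2) * (p * (\<alpha> + \<delta>)\<^sup>2 / (2 * S)) * E2)"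
    by (simp only: rr aEu)
  also have "\<dots> = p / (2 * S) * (A2 - 2 * L * (Dx - Dy + Q - R)) + p * (\<alpha> + \<delta>) / S * (Dy - Q) - p / (2 * S) * X2"
  proof -
    have c': "c / (\<alpha> + \<delta>)\<^sup>2 = p / (2 * S)" using c ad by (simp add: field_simps)
    have k: "(\<alpha>\<^sup>2 / (\<alpha> + \<delta>)\<^sup>2) * (p * (\<alpha> + \<delta>)\<^sup>2 / (2 * S)) = p * \<alpha>\<^sup>2 / (2 * S)"
      using ad by (simp add: field_simps)
    have sd2: "p * (\<alpha> + \<delta>) / S = p - p * L / S" using S Sne by (simp add: field_simps)
    show ?thesis unfolding c' k sd2 using Sne by (simp add: field_simps)
  qed
  also have "\<dots> \<le> 0"
  proof -
    have "p / (2 * S) * (A2 - 2 * L * (Dx - Dy + Q - R)) \<le> 0"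
      using I3 Spos pos by (intro mult_nonneg_nonpos) auto
    moreover have "p * (\<alpha> + \<delta>) / S * (Dy - Q) \<le> 0"
      using I1 Spos pos by (intro mult_nonneg_nonpos) auto
    moreover have "p / (2 * S) * X2 \<ge> 0" using X2 Spos pos by simp
    ultimately show ?thesis by linarith
  qed
  finally show ?thesis by simp
qed

lemma expect_sq:
  fixes M :: "'b pmf" and W :: "'b \<Rightarrow> real"
  assumes "finite (set_pmf M)"
  shows "(measure_pmf.expectation M W)\<^sup>2 \<le> measure_pmf.expectation M (\<lambda>s. (W s)\<^sup>2)"
proof -
  define m where "m = measure_pmf.expectation M W"
  have int: "integrable M h" for h :: "'b \<Rightarrow> real" by (rule integrable_measure_pmf_finite[OF assms])
  have "0 \<le> measure_pmf.expectation M (\<lambda>s. (W s - m)\<^sup>2)" by simp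
  also have "(\<lambda>s. (W s - m)\<^sup>2) = (\<lambda>s. (W s)\<^sup>2 - 2 * m * W s + m\<^sup>2)" by (auto simp: power2_eq_square algebra_simps)
  also have "measure_pmf.expectation M \<dots> = measure_pmf.expectation M (\<lambda>s. (W s)\<^sup>2) - 2 * m * m + m\<^sup>2"
    using int by (simp add: m_def)
  finally show ?thesis unfolding m_def by (simp add: power2_eq_square)
qed

context svrg begin

definition "pp = 1 / real n"
definition "SS = \<alpha> + L + \<delta>"
definition "cc = \<alpha>\<^sup>2 * pp / (2 * (L + (1 - pp) * (\<alpha> + \<delta>)))"
definition "rho2 = \<alpha>\<^sup>2 / (\<alpha> + \<delta>)\<^sup>2"

lemma pp_pos: "pp > 0" and pp_le1: "pp \<le> 1"
  using n_pos by (auto simp: pp_def)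

lemma SS_pos: "SS > 0" using L_pos delta_pos alpha_pos by (simp add: SS_def)

lemma tau_x_eq: "tau_x L \<delta> \<alpha> = (\<alpha> + \<delta>) / SS"
  by (simp add: tau_x_def SS_def)

lemma one_tau_x: "1 - tau_x L \<delta> \<alpha> = L / SS"
  using SS_pos by (simp add: tau_x_eq field_simps SS_def)

lemma tau_z_eq: "tau_z L \<delta> \<alpha> = 1 / SS"
proof -
  have "tau_z L \<delta> \<alpha> = tau_x L \<delta> \<alpha> / \<delta> - \<alpha> * (L / SS) / (\<delta> * L)"
    by (simp add: tau_z_def one_tau_x)
  also have "\<dots> = (\<alpha> + \<delta>) / SS / \<delta> - \<alpha> * (L / SS) / (\<delta> * L)"
    by (simp add: tau_x_eq)
  also have "\<dots> = 1 / SS" using SS_pos delta_pos L_pos by (simp add: field_simps)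
  finally show ?thesis .
qed

lemma aux_rho:
  fixes q a d :: real
  assumes h: "(1 - q) * ((a + d) / a)\<^sup>2 = 1" and a: "a > 0" and d: "d > 0"
  shows "1 - q = a\<^sup>2 / (a + d)\<^sup>2"
proof -
  have "(1 - q) * (a + d)\<^sup>2 / a\<^sup>2 = 1" using h by (simp only: power_divide times_divide_eq_right)
  then have "(1 - q) * (a + d)\<^sup>2 = a\<^sup>2" using nonzero_divide_eq_eq[of "a\<^sup>2" "(1 - q) * (a + d)\<^sup>2" 1] a by simp
  moreover have "(a + d)\<^sup>2 \<noteq> 0" using a d by simp
  ultimately show ?thesis by (simp add: eq_divide_eq)
qed

lemma rho2_eq: "rho2 = 1 - pp * (\<alpha> + \<delta>) / SS"
proof -
  have "(1 + \<delta> / \<alpha>) = (\<alpha> + \<delta>) / \<alpha>" using alpha_pos by (simp add: field_simps)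
  then have "(1 - pp * (\<alpha> + \<delta>) / SS) * ((\<alpha> + \<delta>) / \<alpha>)\<^sup>2 = 1"
    using alpha_root by (simp add: pp_def SS_def)
  then show ?thesis using aux_rho alpha_pos delta_pos by (simp add: rho2_def)
qed

lemma cc_eq: "cc = pp * (\<alpha> + \<delta>)\<^sup>2 / (2 * SS)"
proof -
  have "L + (1 - pp) * (\<alpha> + \<delta>) = SS * (1 - pp * (\<alpha> + \<delta>) / SS)"
    using SS_pos by (simp add: SS_def field_simps)
  also have "\<dots> = SS * rho2" by (simp add: rho2_eq)
  finally have eq: "L + (1 - pp) * (\<alpha> + \<delta>) = SS * (\<alpha>\<^sup>2 / (\<alpha> + \<delta>)\<^sup>2)" by (simp add: rho2_def)
  have ne: "\<alpha> \<noteq> 0" "\<alpha> + \<delta> \<noteq> 0" "SS \<noteq> 0" using alpha_pos delta_pos SS_pos by auto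
  show ?thesis unfolding cc_def eq using ne by (simp add: field_simps)
qed

lemma cc_nonneg: "cc \<ge> 0" using cc_eq pp_pos SS_pos by simp

end

lemma vec_eq_by_inner:
  fixes v w :: "'a::real_inner"
  assumes "\<And>b. v \<bullet> b = w \<bullet> b"
  shows "v = w"
proof -
  have "(v - w) \<bullet> (v - w) = 0" using assms[of "v - w"] by (simp add: inner_diff_left)
  then show ?thesis by simp
qed

context svrg begin

definition Dfun :: "'a \<Rightarrow> 'a \<Rightarrow> real" where
  "Dfun xs x = avgF n f x - avgF n f xs - avgG n g xs \<bullet> (x - xs)"

definition Phi :: "'a \<Rightarrow> 'a \<times> 'a \<Rightarrow> real" where
  "Phi xs s = Dfun xs (snd s) + cc * (norm (fst s - xs))\<^sup>2"

lemma Dfun_nonneg: "Dfun xs x \<ge> 0"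
  using avg_tangent[of xs x] by (simp add: Dfun_def)

lemma Phi_nonneg: "Phi xs s \<ge> 0"
  using Dfun_nonneg cc_nonneg by (simp add: Phi_def)

lemma y_scaled:
  assumes xs: "avgG n g xs = \<delta> *\<^sub>R (x0 - xs)"
  shows "SS *\<^sub>R (y_pt n g L \<delta> \<alpha> x0 z xt - xs)
     = \<alpha> *\<^sub>R (z - xs) + L *\<^sub>R (xt - xs) - (avgG n g xt - avgG n g xs)"
proof -
  have ne: "SS \<noteq> 0" using SS_pos by simp
  have c1: "SS * tau_x L \<delta> \<alpha> = \<alpha> + \<delta>" using ne by (simp add: tau_x_eq)
  have c2: "SS * (1 - tau_x L \<delta> \<alpha>) = L" using ne by (simp add: one_tau_x)
  have c3: "SS * tau_z L \<delta> \<alpha> = 1" using ne by (simp add: tau_z_eq)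
  have "SS *\<^sub>R y_pt n g L \<delta> \<alpha> x0 z xt = (SS * tau_x L \<delta> \<alpha>) *\<^sub>R z + (SS * (1 - tau_x L \<delta> \<alpha>)) *\<^sub>R xt
      + (SS * tau_z L \<delta> \<alpha>) *\<^sub>R (\<delta> *\<^sub>R (xt - z) - gradRegF n g \<delta> x0 xt)"
    unfolding y_pt_def by (simp only: scaleR_add_right scaleR_scaleR)
  also have "\<dots> = (\<alpha> + \<delta>) *\<^sub>R z + L *\<^sub>R xt + (\<delta> *\<^sub>R (xt - z) - (avgG n g xt + \<delta> *\<^sub>R (xt - x0)))"
    unfolding c1 c2 c3 gradRegF_eq by simp
  finally have "SS *\<^sub>R y_pt n g L \<delta> \<alpha> x0 z xt = (\<alpha> + \<delta>) *\<^sub>R z + L *\<^sub>R xt + (\<delta> *\<^sub>R (xt - z) - (avgG n g xt + \<delta> *\<^sub>R (xt - x0)))" .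
  then show ?thesis unfolding xs scaleR_right_diff_distrib[of SS]
    by (simp add: SS_def algebra_simps)
qed

lemma y_inner:
  assumes xs: "avgG n g xs = \<delta> *\<^sub>R (x0 - xs)"
  shows "(y_pt n g L \<delta> \<alpha> x0 z xt - xs) \<bullet> b
     = (\<alpha> / SS) * ((z - xs) \<bullet> b) + (L / SS) * ((xt - xs) \<bullet> b) - (1 / SS) * ((avgG n g xt - avgG n g xs) \<bullet> b)"
proof -
  have ne: "SS \<noteq> 0" using SS_pos by simp
  have "y_pt n g L \<delta> \<alpha> x0 z xt - xs = (1 / SS) *\<^sub>R (SS *\<^sub>R (y_pt n g L \<delta> \<alpha> x0 z xt - xs))"
    using ne by simp
  also have "\<dots> = (1 / SS) *\<^sub>R (\<alpha> *\<^sub>R (z - xs) + L *\<^sub>R (xt - xs) - (avgG n g xt - avgG n g xs))"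
    unfolding y_scaled[OF xs] ..
  finally have eq: "y_pt n g L \<delta> \<alpha> x0 z xt - xs = (1 / SS) *\<^sub>R (\<alpha> *\<^sub>R (z - xs) + L *\<^sub>R (xt - xs) - (avgG n g xt - avgG n g xs))" .
  show ?thesis unfolding eq by (simp add: inner_add_left inner_diff_left algebra_simps)
qed

lemma zn_eq:
  assumes xs: "avgG n g xs = \<delta> *\<^sub>R (x0 - xs)"
  shows "z_next \<alpha> \<delta> (G_vr n g \<delta> x0 i y xt) z y - xs
     = (1 / (\<alpha> + \<delta>)) *\<^sub>R (\<alpha> *\<^sub>R (z - xs) - (g i y - g i xt) - (avgG n g xt - avgG n g xs))"
proof -
  have ad: "\<alpha> + \<delta> > 0" using alpha_pos delta_pos by simp
  have "\<alpha> *\<^sub>R z + \<delta> *\<^sub>R y - G_vr n g \<delta> x0 i y xt - (\<alpha> + \<delta>) *\<^sub>R xs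
      = \<alpha> *\<^sub>R (z - xs) - (g i y - g i xt) - (avgG n g xt - avgG n g xs)"
    unfolding G_vr_def gradRegF_eq gradReg_def xs by (simp add: algebra_simps)
  moreover have "z_next \<alpha> \<delta> (G_vr n g \<delta> x0 i y xt) z y - xs
      = (1 / (\<alpha> + \<delta>)) *\<^sub>R (\<alpha> *\<^sub>R z + \<delta> *\<^sub>R y - G_vr n g \<delta> x0 i y xt - (\<alpha> + \<delta>) *\<^sub>R xs)"
    unfolding z_next_eq[OF ad] using ad by (simp add: scaleR_right_diff_distrib)
  ultimately show ?thesis by simp
qed

lemma sum_a: "(\<Sum>i<n. g i y - g i xt) = real n *\<^sub>R (avgG n g y - avgG n g xt)"
  using n_pos by (simp add: avgG_def sum_subtractf scaleR_diff_right)

lemma I3_avg: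
  "(1 / real n) * (\<Sum>i<n. (norm (g i y - g i xt))\<^sup>2) / (2 * L)
     \<le> avgF n f xt - avgF n f y - avgG n g y \<bullet> (xt - y)"
proof -
  have "(\<Sum>i<n. f i y + g i y \<bullet> (xt - y) + (norm (g i y - g i xt))\<^sup>2 / (2 * L)) \<le> (\<Sum>i<n. f i xt)"
    using comp_coco[of _ y xt] by (intro sum_mono) (simp add: norm_minus_commute)
  then have "(\<Sum>i<n. f i y) + (\<Sum>i<n. g i y) \<bullet> (xt - y) + (\<Sum>i<n. (norm (g i y - g i xt))\<^sup>2) / (2 * L) \<le> (\<Sum>i<n. f i xt)"
    by (simp add: sum.distrib inner_sum_left sum_divide_distrib)
  then have "(1 / real n) * ((\<Sum>i<n. f i y) + (\<Sum>i<n. g i y) \<bullet> (xt - y) + (\<Sum>i<n. (norm (g i y - g i xt))\<^sup>2) / (2 * L)) \<le> (1 / real n) * (\<Sum>i<n. f i xt)"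
    by (intro mult_left_mono) auto
  then show ?thesis
    by (simp add: avgF_def avgG_def algebra_simps)
qed

end

lemma norm_expand:
  fixes e A U :: "'a::real_inner"
  shows "(norm (a *\<^sub>R e - A - U))\<^sup>2 = a\<^sup>2 * (e \<bullet> e) - 2 * a * (e \<bullet> A) - 2 * a * (e \<bullet> U) + A \<bullet> A + 2 * (A \<bullet> U) + U \<bullet> U"
  unfolding power2_norm_eq_inner by (simp add: inner_diff_left inner_diff_right inner_commute algebra_simps power2_eq_square)

context svrg begin

lemma step_bound:
  assumes xs: "avgG n g xs = \<delta> *\<^sub>R (x0 - xs)"
  shows "measure_pmf.expectation (svrg_step n g L \<delta> \<alpha> x0 (z, xt)) (Phi xs) \<le> rho2 * Phi xs (z, xt)"
proof -
  define y where "y = y_pt n g L \<delta> \<alpha> x0 z xt"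
  define zn where "zn i = z_next \<alpha> \<delta> (G_vr n g \<delta> x0 i y xt) z y" for i
  define e where "e = z - xs"
  define d where "d = xt - xs"
  define ux where "ux = avgG n g xt - avgG n g xs"
  define uy where "uy = avgG n g y - avgG n g xs"
  define a where "a i = g i y - g i xt" for i
  define A2 where "A2 = (1 / real n) * (\<Sum>i<n. (norm (g i y - g i xt))\<^sup>2)"
  define Dx where "Dx = Dfun xs xt"
  define Dy where "Dy = Dfun xs y"
  define K where "K = (1 / (\<alpha> + \<delta>))\<^sup>2"
  have nz: "real n \<noteq> 0" using n_pos by simp
  have step: "svrg_step n g L \<delta> \<alpha> x0 (z, xt) = pmf_of_set {..<n} \<bind> (\<lambda>i. map_pmf (\<lambda>b. (zn i, if b then y else xt)) (bernoulli_pmf pp))"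
    unfolding svrg_step_def y_def zn_def Let_def map_pmf_def pp_def by simp
  have "0 \<in> {..<n}" using n_pos by simp
  then have nonempty: "{..<n} \<noteq> {}" by blast
  have finb: "finite (set_pmf (bernoulli_pmf pp))" by (rule finite_subset[OF subset_UNIV]) simp
  have E1: "measure_pmf.expectation (svrg_step n g L \<delta> \<alpha> x0 (z, xt)) (Phi xs)
      = (\<Sum>i<n. measure_pmf.expectation (map_pmf (\<lambda>b. (zn i, if b then y else xt)) (bernoulli_pmf pp)) (Phi xs) /\<^sub>R real (card {..<n}))"
    unfolding step by (rule pmf_expectation_bind_pmf_of_set) (auto simp: nonempty finb)
  have Ei: "measure_pmf.expectation (map_pmf (\<lambda>b. (zn i, if b then y else xt)) (bernoulli_pmf pp)) (Phi xs)
      = pp * Dy + (1 - pp) * Dx + cc * (norm (zn i - xs))\<^sup>2" for i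
    using pp_pos pp_le1 by (simp add: Phi_def Dx_def Dy_def algebra_simps)
  have Ni: "(norm (zn i - xs))\<^sup>2 = K * (\<alpha>\<^sup>2 * (e \<bullet> e) - 2 * \<alpha> * (e \<bullet> a i) - 2 * \<alpha> * (e \<bullet> ux) + a i \<bullet> a i + 2 * (a i \<bullet> ux) + ux \<bullet> ux)" for i
  proof -
    have "(norm (zn i - xs))\<^sup>2 = K * (norm (\<alpha> *\<^sub>R e - a i - ux))\<^sup>2"
      unfolding zn_def zn_eq[OF xs] e_def a_def ux_def K_def by (simp add: power_divide power2_abs)
    then show ?thesis by (simp only: norm_expand)
  qed
  have suma: "(\<Sum>i<n. a i) = real n *\<^sub>R (uy - ux)"
    unfolding a_def uy_def ux_def using sum_a[of y xt] by simp
  have sumN: "(\<Sum>i<n. (norm (zn i - xs))\<^sup>2) = real n * (K * (\<alpha>\<^sup>2 * (e \<bullet> e) - 2 * (\<alpha> * (e \<bullet> uy)) + A2 + 2 * (ux \<bullet> uy) - ux \<bullet> ux))"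
  proof -
    have "(\<Sum>i<n. (norm (zn i - xs))\<^sup>2) = K * (real n * (\<alpha>\<^sup>2 * (e \<bullet> e)) - 2 * \<alpha> * (e \<bullet> (\<Sum>i<n. a i)) - real n * (2 * \<alpha> * (e \<bullet> ux))
        + (\<Sum>i<n. a i \<bullet> a i) + 2 * ((\<Sum>i<n. a i) \<bullet> ux) + real n * (ux \<bullet> ux))"
      unfolding Ni by (simp add: sum.distrib sum_subtractf sum_distrib_left inner_sum_right inner_sum_left algebra_simps)
    also have "(\<Sum>i<n. a i \<bullet> a i) = real n * A2"
      unfolding A2_def a_def using nz by (simp add: power2_norm_eq_inner)
    finally show ?thesis unfolding suma using nz
      by (simp add: inner_diff_left inner_diff_right inner_commute algebra_simps)
  qed
  have E2: "measure_pmf.expectation (svrg_step n g L \<delta> \<alpha> x0 (z, xt)) (Phi xs)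
      = pp * Dy + (1 - pp) * Dx + cc * (K * (\<alpha>\<^sup>2 * (e \<bullet> e) - 2 * (\<alpha> * (e \<bullet> uy)) + A2 + 2 * (ux \<bullet> uy) - ux \<bullet> ux))"
  proof -
    have "measure_pmf.expectation (svrg_step n g L \<delta> \<alpha> x0 (z, xt)) (Phi xs)
        = (\<Sum>i<n. (pp * Dy + (1 - pp) * Dx + cc * (norm (zn i - xs))\<^sup>2) / real n)"
      unfolding E1 Ei by (simp add: divide_inverse_commute)
    also have "\<dots> = pp * Dy + (1 - pp) * Dx + cc * ((\<Sum>i<n. (norm (zn i - xs))\<^sup>2) / real n)"
    proof -
      define C where "C = pp * Dy + (1 - pp) * Dx"
      define N where "N i = (norm (zn i - xs))\<^sup>2" for i
      have "(\<Sum>i<n. (C + cc * N i) / real n) = (\<Sum>i<n. C + cc * N i) / real n"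
        by (simp add: sum_divide_distrib)
      also have "\<dots> = (real n * C + cc * (\<Sum>i<n. N i)) / real n"
        by (simp add: sum.distrib sum_distrib_left)
      also have "\<dots> = C + cc * ((\<Sum>i<n. N i) / real n)" using nz by (simp add: field_simps)
      finally show ?thesis unfolding C_def N_def .
    qed
    also have "\<dots> = pp * Dy + (1 - pp) * Dx + cc * (K * (\<alpha>\<^sup>2 * (e \<bullet> e) - 2 * (\<alpha> * (e \<bullet> uy)) + A2 + 2 * (ux \<bullet> uy) - ux \<bullet> ux))"
      unfolding sumN using nz by simp
    finally show ?thesis .
  qed
  have Q: "(y - xs) \<bullet> uy = (\<alpha> / SS) * (e \<bullet> uy) + (L / SS) * (d \<bullet> uy) - (1 / SS) * (ux \<bullet> uy)"
    unfolding y_def e_def d_def ux_def by (rule y_inner[OF xs])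
  have I1: "Dy \<le> (y - xs) \<bullet> uy"
  proof -
    have nn: "0 \<le> (norm (avgG n g xs - avgG n g y))\<^sup>2 / (2 * L)" using L_pos by simp
    have c: "avgF n f y + avgG n g y \<bullet> (xs - y) \<le> avgF n f xs" using avg_coco[of y xs] nn by linarith
    then show ?thesis unfolding Dy_def Dfun_def uy_def
      by (simp add: inner_diff_left inner_diff_right inner_commute algebra_simps)
  qed
  have I3: "A2 \<le> 2 * L * (Dx - Dy + (y - xs) \<bullet> uy - d \<bullet> uy)"
  proof -
    define T where "T = avgF n f xt - avgF n f y - avgG n g y \<bullet> (xt - y)"
    have "A2 / (2 * L) \<le> T"
      using I3_avg[of y xt] unfolding A2_def T_def by simp
    then have a: "A2 \<le> T * (2 * L)" using L_pos by (simp add: pos_divide_le_eq)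
    have eq: "Dx - Dy + (y - xs) \<bullet> uy - d \<bullet> uy = T"
      unfolding Dx_def Dy_def Dfun_def uy_def d_def T_def
      by (simp add: inner_diff_left inner_diff_right inner_commute algebra_simps)
    show ?thesis unfolding eq using a by (simp add: mult.commute)
  qed
  have core: "pp * Dy + (1 - pp) * Dx + cc / (\<alpha> + \<delta>)\<^sup>2 * (\<alpha>\<^sup>2 * (e \<bullet> e) - 2 * (\<alpha> * (e \<bullet> uy)) + A2 + 2 * (ux \<bullet> uy) - ux \<bullet> ux)
         \<le> rho2 * (Dx + cc * (e \<bullet> e))"
    by (rule core_alg[OF SS_def alpha_pos delta_pos L_pos pp_pos cc_eq rho2_def rho2_eq Q I1 I3])
       (simp add: inner_ge_zero)
  have "cc * (K * X) = cc / (\<alpha> + \<delta>)\<^sup>2 * X" for X unfolding K_def by (simp add: power_divide)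
  then have "measure_pmf.expectation (svrg_step n g L \<delta> \<alpha> x0 (z, xt)) (Phi xs) \<le> rho2 * (Dx + cc * (e \<bullet> e))"
    using core unfolding E2 by simp
  then show ?thesis unfolding Phi_def Dx_def e_def by (simp add: power2_norm_eq_inner)
qed

end

context svrg begin

lemma nonempty_n: "{..<n} \<noteq> {}"
proof -
  have "0 \<in> {..<n}" using n_pos by simp
  then show ?thesis by blast
qed

lemma fin_step: "finite (set_pmf (svrg_step n g L \<delta> \<alpha> x0 s))"
proof -
  obtain z xt where s: "s = (z, xt)" by (cases s)
  have finb: "finite (set_pmf (bernoulli_pmf (1 / real n)))" by (rule finite_subset[OF subset_UNIV]) simp
  show ?thesis unfolding s svrg_step_def Let_def using nonempty_n finb by simp
qed

lemma fin_state: "finite (set_pmf (svrg_state n g L \<delta> \<alpha> x0 k))"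
proof (induction k)
  case 0 then show ?case by simp
next
  case (Suc k) then show ?case using fin_step by simp
qed

lemma expect_state:
  assumes xs: "avgG n g xs = \<delta> *\<^sub>R (x0 - xs)"
  shows "measure_pmf.expectation (svrg_state n g L \<delta> \<alpha> x0 k) (Phi xs) \<le> rho2 ^ k * Phi xs (x0, x0)"
proof (induction k)
  case 0 then show ?case by simp
next
  case (Suc k)
  define M where "M = svrg_state n g L \<delta> \<alpha> x0 k"
  have finM: "finite (set_pmf M)" unfolding M_def by (rule fin_state)
  have r0: "rho2 \<ge> 0" by (simp add: rho2_def)
  have "measure_pmf.expectation (svrg_state n g L \<delta> \<alpha> x0 (Suc k)) (Phi xs)
      = (\<Sum>a\<in>set_pmf M. pmf M a *\<^sub>R measure_pmf.expectation (svrg_step n g L \<delta> \<alpha> x0 a) (Phi xs))"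
    unfolding M_def svrg_state.simps by (rule pmf_expectation_bind) (auto simp: fin_state fin_step)
  also have "\<dots> \<le> (\<Sum>a\<in>set_pmf M. pmf M a * (rho2 * Phi xs a))"
  proof (rule sum_mono)
    fix a assume "a \<in> set_pmf M"
    have "measure_pmf.expectation (svrg_step n g L \<delta> \<alpha> x0 (fst a, snd a)) (Phi xs) \<le> rho2 * Phi xs (fst a, snd a)"
      by (rule step_bound[OF xs])
    then show "pmf M a *\<^sub>R measure_pmf.expectation (svrg_step n g L \<delta> \<alpha> x0 a) (Phi xs) \<le> pmf M a * (rho2 * Phi xs a)"
      by (simp add: mult_left_mono)
  qed
  also have "\<dots> = rho2 * (\<Sum>a\<in>set_pmf M. pmf M a *\<^sub>R Phi xs a)"
    by (simp add: sum_distrib_left algebra_simps)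
  also have "(\<Sum>a\<in>set_pmf M. pmf M a *\<^sub>R Phi xs a) = measure_pmf.expectation M (Phi xs)"
    by (rule integral_measure_pmf[symmetric]) (auto simp: finM)
  also have "rho2 * measure_pmf.expectation M (Phi xs) \<le> rho2 * (rho2 ^ k * Phi xs (x0, x0))"
    using Suc r0 unfolding M_def by (intro mult_left_mono) auto
  finally show ?case by simp
qed

end

context svrg begin

lemma final_bound:
  assumes xs: "avgG n g xs = \<delta> *\<^sub>R (x0 - xs)"
  shows "measure_pmf.expectation (svrg_state n g L \<delta> \<alpha> x0 k) (\<lambda>s. norm (avgG n g (snd s)))
     \<le> norm (avgG n g xs) + (1 / (1 + \<delta> / \<alpha>)) ^ k * sqrt (2 * L * Phi xs (x0, x0))"
proof -
  define M where "M = svrg_state n g L \<delta> \<alpha> x0 k"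
  have finM: "finite (set_pmf M)" unfolding M_def by (rule fin_state)
  have int: "integrable (measure_pmf M) h" for h :: "'a \<times> 'a \<Rightarrow> real"
    by (rule integrable_measure_pmf_finite[OF finM])
  define W where "W s = norm (avgG n g (snd s) - avgG n g xs)" for s :: "'a \<times> 'a"
  have "measure_pmf.expectation M (\<lambda>s. norm (avgG n g (snd s))) \<le> measure_pmf.expectation M (\<lambda>s. norm (avgG n g xs) + W s)"
    using int by (intro integral_mono) (auto simp: W_def intro: norm_triangle_sub)
  also have "\<dots> = norm (avgG n g xs) + measure_pmf.expectation M W"
    using int by simp
  finally have e1: "measure_pmf.expectation M (\<lambda>s. norm (avgG n g (snd s))) \<le> norm (avgG n g xs) + measure_pmf.expectation M W" .
  have Wsq: "(W s)\<^sup>2 \<le> 2 * L * Phi xs s" for s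
  proof -
    have "avgF n f xs + avgG n g xs \<bullet> (snd s - xs) + (W s)\<^sup>2 / (2 * L) \<le> avgF n f (snd s)"
      using avg_coco[of xs "snd s"] unfolding W_def .
    then have "(W s)\<^sup>2 / (2 * L) \<le> Dfun xs (snd s)" by (simp add: Dfun_def)
    then have "(W s)\<^sup>2 \<le> Dfun xs (snd s) * (2 * L)" using L_pos by (simp add: pos_divide_le_eq)
    moreover have "Dfun xs (snd s) \<le> Phi xs s" using cc_nonneg by (simp add: Phi_def)
    ultimately have "(W s)\<^sup>2 \<le> Phi xs s * (2 * L)"
      using L_pos by (meson less_imp_le mult_right_mono order_trans zero_le_mult_iff zero_le_numeral)
    then show ?thesis by (simp add: mult.commute)
  qed
  have "(measure_pmf.expectation M W)\<^sup>2 \<le> measure_pmf.expectation M (\<lambda>s. (W s)\<^sup>2)"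
    by (rule expect_sq[OF finM])
  also have "\<dots> \<le> measure_pmf.expectation M (\<lambda>s. 2 * L * Phi xs s)"
    using int by (intro integral_mono) (auto simp: Wsq)
  also have "\<dots> = 2 * L * measure_pmf.expectation M (Phi xs)" by simp
  also have "\<dots> \<le> 2 * L * (rho2 ^ k * Phi xs (x0, x0))"
    using expect_state[OF xs, of k] L_pos unfolding M_def by (intro mult_left_mono) auto
  finally have sq: "(measure_pmf.expectation M W)\<^sup>2 \<le> ((1 / (1 + \<delta> / \<alpha>)) ^ k)\<^sup>2 * (2 * L * Phi xs (x0, x0))"
  proof -
    assume h: "(measure_pmf.expectation M W)\<^sup>2 \<le> 2 * L * (rho2 ^ k * Phi xs (x0, x0))"
    have "rho2 = (1 / (1 + \<delta> / \<alpha>))\<^sup>2"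
      using alpha_pos delta_pos by (simp add: rho2_def field_simps)
    then have "rho2 ^ k = ((1 / (1 + \<delta> / \<alpha>)) ^ k)\<^sup>2" by (simp only: power2_eq_square power_mult_distrib)
    then show ?thesis using h by (simp add: algebra_simps)
  qed
  have "measure_pmf.expectation M W \<le> sqrt (((1 / (1 + \<delta> / \<alpha>)) ^ k)\<^sup>2 * (2 * L * Phi xs (x0, x0)))"
    by (rule real_le_rsqrt[OF sq])
  also have "\<dots> = (1 / (1 + \<delta> / \<alpha>)) ^ k * sqrt (2 * L * Phi xs (x0, x0))"
    using alpha_pos delta_pos by (simp add: real_sqrt_mult)
  finally show ?thesis using e1 unfolding M_def by simp
qed

end

context svrg begin

lemma aux_half: "(2::real) * L * (A / (2 * X)) = L * A / X"
  by (cases "X = 0") (simp_all add: field_simps)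

lemma main:
  "\<forall>k.
     (\<forall>xs R0. (\<forall>x. avgF n f xs \<le> avgF n f x) \<and> norm (x0 - xs) \<le> R0 \<longrightarrow>
        measure_pmf.expectation (svrg_state n g L \<delta> \<alpha> x0 k) (\<lambda>s. norm (avgG n g (snd s)))
          \<le> (\<delta> + sqrt (C_IDC (1 / real n) L \<delta> \<alpha>) / (1 + \<delta> / \<alpha>) ^ k) * R0)
   \<and> (\<forall>\<Delta>0. avgF n f x0 - (INF x. avgF n f x) \<le> \<Delta>0 \<longrightarrow>
        measure_pmf.expectation (svrg_state n g L \<delta> \<alpha> x0 k) (\<lambda>s. norm (avgG n g (snd s)))
          \<le> (sqrt (2 * \<delta>) + sqrt (C_IFC (1 / real n) L \<delta> \<alpha>) / (1 + \<delta> / \<alpha>) ^ k) * sqrt \<Delta>0)"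
proof (intro allI conjI impI)
  fix k
  obtain xs where xs: "avgG n g xs = \<delta> *\<^sub>R (x0 - xs)" and hmin: "\<And>x. hreg xs \<le> hreg x"
    using xstar_exists by blast
  define B where "B = (1 / (1 + \<delta> / \<alpha>)) ^ k"
  have B0: "B \<ge> 0" unfolding B_def using alpha_pos delta_pos by simp
  have Bdiv: "X / (1 + \<delta> / \<alpha>) ^ k = B * X" for X unfolding B_def by (simp add: power_divide)
  define E where "E = measure_pmf.expectation (svrg_state n g L \<delta> \<alpha> x0 k) (\<lambda>s. norm (avgG n g (snd s)))"
  define P0 where "P0 = Phi xs (x0, x0)"
  have fb: "E \<le> norm (avgG n g xs) + B * sqrt (2 * L * P0)"
    unfolding E_def B_def P0_def by (rule final_bound[OF xs])
  have nU: "norm (avgG n g xs) = \<delta> * norm (x0 - xs)" using xs delta_pos by simp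
  have P0: "P0 = Dfun xs x0 + cc * (norm (x0 - xs))\<^sup>2" by (simp add: P0_def Phi_def)
  have cc2: "2 * L * cc = L * \<alpha>\<^sup>2 * (1 / real n) / (L + (1 - 1 / real n) * (\<alpha> + \<delta>))"
    unfolding cc_def pp_def aux_half by (simp add: mult.assoc)
  {
    fix xm R0 assume a: "(\<forall>x. avgF n f xm \<le> avgF n f x) \<and> norm (x0 - xm) \<le> R0"
    have h1: "hreg xs \<le> hreg xm" by (rule hmin)
    have "avgF n f xm \<le> avgF n f xs" using a by blast
    then have "\<delta> / 2 * (norm (xs - x0))\<^sup>2 \<le> \<delta> / 2 * (norm (xm - x0))\<^sup>2" using h1 by (simp add: hreg_def)
    then have "(norm (x0 - xs))\<^sup>2 \<le> (norm (x0 - xm))\<^sup>2" using delta_pos by (simp add: norm_minus_commute)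
    then have "norm (x0 - xs) \<le> norm (x0 - xm)" by (rule power2_le_imp_le) simp
    then have nx: "norm (x0 - xs) \<le> R0" using a by linarith
    have R0: "R0 \<ge> 0" using a norm_ge_zero order_trans by blast
    have D0: "Dfun xs x0 \<le> L / 2 * (norm (x0 - xs))\<^sup>2"
      using avg_descent[of x0 xs] by (simp add: Dfun_def)
    have "2 * L * P0 \<le> 2 * L * (L / 2 * (norm (x0 - xs))\<^sup>2 + cc * (norm (x0 - xs))\<^sup>2)"
      unfolding P0 using D0 L_pos by simp
    also have "\<dots> = (L\<^sup>2 + 2 * L * cc) * (norm (x0 - xs))\<^sup>2" by (simp add: algebra_simps power2_eq_square)
    also have "\<dots> \<le> (L\<^sup>2 + 2 * L * cc) * R0\<^sup>2"
      using nx L_pos cc_nonneg by (intro mult_left_mono power_mono) auto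
    also have "L\<^sup>2 + 2 * L * cc = C_IDC (1 / real n) L \<delta> \<alpha>" unfolding cc2 C_IDC_def ..
    finally have "sqrt (2 * L * P0) \<le> sqrt (C_IDC (1 / real n) L \<delta> \<alpha> * R0\<^sup>2)" by simp
    also have "\<dots> = sqrt (C_IDC (1 / real n) L \<delta> \<alpha>) * R0" using R0 by (simp add: real_sqrt_mult)
    finally have s1: "sqrt (2 * L * P0) \<le> sqrt (C_IDC (1 / real n) L \<delta> \<alpha>) * R0" .
    have "E \<le> \<delta> * R0 + B * (sqrt (C_IDC (1 / real n) L \<delta> \<alpha>) * R0)"
      using fb nU nx s1 B0 delta_pos
      by (smt (verit, best) mult_left_mono)
    then show "measure_pmf.expectation (svrg_state n g L \<delta> \<alpha> x0 k) (\<lambda>s. norm (avgG n g (snd s)))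
          \<le> (\<delta> + sqrt (C_IDC (1 / real n) L \<delta> \<alpha>) / (1 + \<delta> / \<alpha>) ^ k) * R0"
      unfolding E_def Bdiv by (simp add: algebra_simps)
  }
  {
    fix \<Delta>0 assume a: "avgF n f x0 - (INF x. avgF n f x) \<le> \<Delta>0"
    obtain xm where xm: "\<And>x. avgF n f xm \<le> avgF n f x" using minimizer_exists by blast
    have "(INF x. avgF n f x) = avgF n f xm"
      by (rule cInf_eq_minimum) (auto simp: xm)
    then have a': "avgF n f x0 - avgF n f xm \<le> \<Delta>0" using a by simp
    have h1: "hreg xs \<le> hreg x0" by (rule hmin)
    then have h1': "avgF n f xs + \<delta> / 2 * (norm (x0 - xs))\<^sup>2 \<le> avgF n f x0"
      by (simp add: hreg_def norm_minus_commute)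
    have fxs: "avgF n f xm \<le> avgF n f xs" by (rule xm)
    have nsq: "\<delta> / 2 * (norm (x0 - xs))\<^sup>2 \<le> \<Delta>0" using h1' fxs a' by linarith
    have D0: "Dfun xs x0 \<le> \<Delta>0"
    proof -
      have "Dfun xs x0 = avgF n f x0 - avgF n f xs - \<delta> * (norm (x0 - xs))\<^sup>2"
        unfolding Dfun_def xs by (simp add: power2_norm_eq_inner inner_commute)
      moreover have "\<delta> * (norm (x0 - xs))\<^sup>2 \<ge> 0" using delta_pos by simp
      ultimately show ?thesis using fxs a' by linarith
    qed
    have D00: "\<Delta>0 \<ge> 0" using nsq delta_pos
      by (smt (verit) divide_nonneg_pos mult_nonneg_nonneg zero_le_power2)
    have nsq2: "(norm (x0 - xs))\<^sup>2 \<le> 2 * \<Delta>0 / \<delta>" using nsq delta_pos by (simp add: field_simps)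
    have "2 * L * P0 \<le> 2 * L * (\<Delta>0 + cc * (2 * \<Delta>0 / \<delta>))"
      unfolding P0 using D0 L_pos cc_nonneg nsq2
      by (intro mult_left_mono add_mono) (auto intro: mult_left_mono)
    also have "\<dots> = (2 * L + 2 * (2 * L * cc) / \<delta>) * \<Delta>0" using delta_pos by (simp add: field_simps)
    also have "2 * L + 2 * (2 * L * cc) / \<delta> = C_IFC (1 / real n) L \<delta> \<alpha>"
      unfolding cc2 C_IFC_def by (simp add: field_simps)
    finally have "sqrt (2 * L * P0) \<le> sqrt (C_IFC (1 / real n) L \<delta> \<alpha> * \<Delta>0)" by simp
    also have "\<dots> = sqrt (C_IFC (1 / real n) L \<delta> \<alpha>) * sqrt \<Delta>0" by (simp add: real_sqrt_mult)
    finally have s1: "sqrt (2 * L * P0) \<le> sqrt (C_IFC (1 / real n) L \<delta> \<alpha>) * sqrt \<Delta>0" .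
    have "(\<delta> * norm (x0 - xs))\<^sup>2 = \<delta> * (\<delta> * (norm (x0 - xs))\<^sup>2)" by (simp add: power2_eq_square)
    also have "\<dots> \<le> \<delta> * (2 * \<Delta>0)" using nsq delta_pos by (intro mult_left_mono) (auto simp: field_simps)
    finally have "\<delta> * norm (x0 - xs) \<le> sqrt (2 * \<delta> * \<Delta>0)" by (intro real_le_rsqrt) (simp add: algebra_simps)
    also have "\<dots> = sqrt (2 * \<delta>) * sqrt \<Delta>0" by (simp add: real_sqrt_mult)
    finally have s2: "norm (avgG n g xs) \<le> sqrt (2 * \<delta>) * sqrt \<Delta>0" using nU by simp
    have "E \<le> sqrt (2 * \<delta>) * sqrt \<Delta>0 + B * (sqrt (C_IFC (1 / real n) L \<delta> \<alpha>) * sqrt \<Delta>0)"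
      using fb s1 s2 B0 by (smt (verit, best) mult_left_mono)
    then show "measure_pmf.expectation (svrg_state n g L \<delta> \<alpha> x0 k) (\<lambda>s. norm (avgG n g (snd s)))
          \<le> (sqrt (2 * \<delta>) + sqrt (C_IFC (1 / real n) L \<delta> \<alpha>) / (1 + \<delta> / \<alpha>) ^ k) * sqrt \<Delta>0"
      unfolding E_def Bdiv by (simp add: algebra_simps)
  }
qed

end

theorem proposition4:
  fixes n :: nat and f :: "nat \<Rightarrow> 'a::euclidean_space \<Rightarrow> real" and g :: "nat \<Rightarrow> 'a \<Rightarrow> 'a"
    and L \<delta> \<alpha> :: real and x0 :: 'a
  assumes n_pos: "n \<ge> 1"
    and L_pos: "L > 0"
    and convex: "\<And>i. i < n \<Longrightarrow> convex_on UNIV (f i)"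
    and grad: "\<And>i x. i < n \<Longrightarrow> GDERIV (f i) x :> g i x"
    and smooth: "\<And>i x y. i < n \<Longrightarrow> norm (g i x - g i y) \<le> L * norm (x - y)"
    and minimizer_exists: "\<exists>xs. \<forall>x. avgF n f xs \<le> avgF n f x"
    and delta_pos: "\<delta> > 0"
    and alpha_pos: "\<alpha> > 0"
    and alpha_root: "(1 - (1 / real n) * (\<alpha> + \<delta>) / (\<alpha> + L + \<delta>)) * (1 + \<delta> / \<alpha>)\<^sup>2 = 1"
  shows "\<forall>k.
     (\<forall>xs R0. (\<forall>x. avgF n f xs \<le> avgF n f x) \<and> norm (x0 - xs) \<le> R0 \<longrightarrow>
        measure_pmf.expectation (svrg_state n g L \<delta> \<alpha> x0 k) (\<lambda>s. norm (avgG n g (snd s)))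
          \<le> (\<delta> + sqrt (C_IDC (1 / real n) L \<delta> \<alpha>) / (1 + \<delta> / \<alpha>) ^ k) * R0)
   \<and> (\<forall>\<Delta>0. avgF n f x0 - (INF x. avgF n f x) \<le> \<Delta>0 \<longrightarrow>
        measure_pmf.expectation (svrg_state n g L \<delta> \<alpha> x0 k) (\<lambda>s. norm (avgG n g (snd s)))
          \<le> (sqrt (2 * \<delta>) + sqrt (C_IFC (1 / real n) L \<delta> \<alpha>) / (1 + \<delta> / \<alpha>) ^ k) * sqrt \<Delta>0)"
  proof -
  interpret svrg n f g L \<delta> \<alpha> x0
    by (rule svrg.intro) (use assms in auto)
  show ?thesis by (rule main)
qed

end
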